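(* Let $\mathscr{C}=\left\{\sum_{i=1}^{\infty} t_i 3^{-i} : t_i\in\{0,2\}\right\}$ be the middle-third Cantor set. Then \[\left[\left(\tfrac{8}{9}\right)^{3},\tfrac{8}{9}\right]\subseteq \mathscr{C}\cdot\mathscr{C}\cdot\mathscr{C}\cdot\mathscr{C}=\{abcd : a,b,c,d\in\mathscr{C}\}.\] *)

theory Defs
  imports "HOL-Analysis.Analysis"
begin

text \<open>The digit sequence is indexed from 0 here, digit \<open>t n\<close> having weight \<open>3^{-(n+1)}\<close>.\<close>
definition cantor_set :: "real set" where
  "cantor_set = {x. \<exists>t :: nat \<Rightarrow> real. (\<forall>i. t i \<in> {0, 2}) \<and>
                       x = (\<Sum>i. t i / 3 ^ (Suc i))}"

end

theory Submission
  imports Defs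
begin

lemma split1:
  fixes a h A B u :: real
  assumes "h > 0" "a * A \<le> u" "u \<le> (a + 3*h) * B" "(a + 2*h) * A \<le> (a + h) * B"
  shows "\<exists>e\<in>{0,2::real}. (a + e*h) * A \<le> u \<and> u \<le> (a + e*h + h) * B"
proof (cases "u \<le> (a + h) * B")
  case True
  then show ?thesis using assms by auto
next
  case False
  then have "(a + 2*h) * A \<le> u" using assms by linarith
  moreover have "u \<le> (a + 2*h + h) * B" using assms by (simp add: algebra_simps)
  ultimately show ?thesis by auto
qed

lemma core:
  fixes x y z w Y Z W h :: real
  assumes "x \<ge> 1/3" "h > 0" "0 < y" "0 < z" "0 < w" "y \<le> 1" "z \<le> 1" "w \<le> 1"
    "Y \<ge> y + h" "Z \<ge> z + h" "W \<ge> w + h"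
  shows "(x + 2*h) * (y*z*w) \<le> (x + h) * (Y*Z*W)"
proof -
  have "(y+h)*(z+h) \<le> Y*Z"
    using assms by (intro mult_mono) auto
  then have "(y+h)*(z+h)*(w+h) \<le> Y*Z*W"
    using assms by (intro mult_mono) auto
  have e: "(y+h)*(z+h)*(w+h) = y*z*w + h*(y*z + z*w + w*y) + h*h*(y+z+w) + h*h*h"
    by (simp add: algebra_simps)
  have "y*z*w \<le> y*z" using assms by (simp add: mult_left_le)
  moreover have "y*z*w \<le> z*w" using assms
    by (metis mult.commute mult.left_commute mult_left_le less_eq_real_def mult_pos_pos)
  moreover have "y*z*w \<le> w*y" using assms
    by (metis mult.commute mult.left_commute mult_left_le less_eq_real_def mult_pos_pos)
  ultimately have "3 * (y*z*w) \<le> y*z + z*w + w*y" by linarith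
  moreover have "0 \<le> h*h*(y+z+w) + h*h*h" using assms by simp
  ultimately have T1: "3 * (y*z*w) \<le> y*z + z*w + w*y" and T2: "0 \<le> h*h*(y+z+w) + h*h*h" by blast+
  have "h * (3 * (y*z*w)) \<le> h * (y*z + z*w + w*y)" using T1 assms(2) by (intro mult_left_mono) auto
  moreover have "y*z*w*(1 + 3*h) = y*z*w + h * (3 * (y*z*w))" by (simp add: algebra_simps)
  ultimately have "y*z*w*(1 + 3*h) \<le> (y+h)*(z+h)*(w+h)" unfolding e using T2
    by linarith
  then have P: "y*z*w*(1 + 3*h) \<le> Y*Z*W" using \<open>(y+h)*(z+h)*(w+h) \<le> Y*Z*W\<close> by linarith
  have "h \<le> 3*h*x" using assms by simp
  moreover have "0 \<le> 3*h*h" using assms by simp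
  moreover have "(x+h)*(1+3*h) = x + h + 3*h*x + 3*h*h" by (simp add: algebra_simps)
  ultimately have "x + 2*h \<le> (x+h)*(1+3*h)" by linarith
  then have "(x + 2*h) * (y*z*w) \<le> (x+h)*(1+3*h)*(y*z*w)"
    using assms by (intro mult_right_mono) auto
  also have "\<dots> = (x+h) * (y*z*w*(1+3*h))" by simp
  also have "\<dots> \<le> (x+h) * (Y*Z*W)" using P assms by (intro mult_left_mono) auto
  finally show ?thesis .
qed

lemma four_split:
  fixes a0 a1 a2 a3 h u :: real
  assumes h: "h > 0"
    and b0: "2/3 \<le> a0" "a0 + 3*h \<le> 1"
    and b1: "2/3 \<le> a1" "a1 + 3*h \<le> 1"
    and b2: "2/3 \<le> a2" "a2 + 3*h \<le> 1"
    and b3: "2/3 \<le> a3" "a3 + 3*h \<le> 1"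
    and u: "a0*a1*a2*a3 \<le> u" "u \<le> (a0+3*h)*(a1+3*h)*(a2+3*h)*(a3+3*h)"
  shows "\<exists>e0\<in>{0,2}. \<exists>e1\<in>{0,2}. \<exists>e2\<in>{0,2}. \<exists>e3\<in>{0,2}.
     (a0+e0*h)*(a1+e1*h)*(a2+e2*h)*(a3+e3*h) \<le> u \<and>
     u \<le> (a0+e0*h+h)*(a1+e1*h+h)*(a2+e2*h+h)*(a3+e3*h+h)"
proof -
  have s1: "(a0 + 2*h) * (a1*a2*a3) \<le> (a0 + h) * ((a1+3*h)*(a2+3*h)*(a3+3*h))"
    by (rule core) (use h b0 b1 b2 b3 in auto)
  have "\<exists>e\<in>{0,2::real}. (a0 + e*h) * (a1*a2*a3) \<le> u \<and> u \<le> (a0 + e*h + h) * ((a1+3*h)*(a2+3*h)*(a3+3*h))"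
    by (rule split1[OF h _ _ s1]) (use u in \<open>simp_all add: mult_ac\<close>)
  then obtain e0 where e0: "e0 \<in> {0,2}" "(a0 + e0*h) * (a1*a2*a3) \<le> u"
      "u \<le> (a0 + e0*h + h) * ((a1+3*h)*(a2+3*h)*(a3+3*h))" by blast
  define c0 where "c0 = a0 + e0*h"
  have e0': "c0 * (a1*a2*a3) \<le> u" "u \<le> (c0 + h) * ((a1+3*h)*(a2+3*h)*(a3+3*h))"
    using e0 by (simp_all add: c0_def)
  have c0: "2/3 \<le> c0" "c0 + h \<le> 1" using e0(1) b0 h by (auto simp: c0_def)
  have s2: "(a1 + 2*h) * (c0*a2*a3) \<le> (a1 + h) * ((c0+h)*(a2+3*h)*(a3+3*h))"
    by (rule core) (use h c0 b1 b2 b3 in auto)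
  have "\<exists>e\<in>{0,2::real}. (a1 + e*h) * (c0*a2*a3) \<le> u \<and> u \<le> (a1 + e*h + h) * ((c0+h)*(a2+3*h)*(a3+3*h))"
    by (rule split1[OF h _ _ s2]) (use e0' in \<open>simp_all add: mult_ac\<close>)
  then obtain e1 where e1: "e1 \<in> {0,2}" "(a1 + e1*h) * (c0*a2*a3) \<le> u"
      "u \<le> (a1 + e1*h + h) * ((c0+h)*(a2+3*h)*(a3+3*h))" by blast
  define c1 where "c1 = a1 + e1*h"
  have e1': "c1 * (c0*a2*a3) \<le> u" "u \<le> (c1 + h) * ((c0+h)*(a2+3*h)*(a3+3*h))"
    using e1 by (simp_all add: c1_def)
  have c1: "2/3 \<le> c1" "c1 + h \<le> 1" using e1(1) b1 h by (auto simp: c1_def)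
  have s3: "(a2 + 2*h) * (c0*c1*a3) \<le> (a2 + h) * ((c0+h)*(c1+h)*(a3+3*h))"
    by (rule core) (use h c0 c1 b2 b3 in auto)
  have "\<exists>e\<in>{0,2::real}. (a2 + e*h) * (c0*c1*a3) \<le> u \<and> u \<le> (a2 + e*h + h) * ((c0+h)*(c1+h)*(a3+3*h))"
    by (rule split1[OF h _ _ s3]) (use e1' in \<open>simp_all add: mult_ac\<close>)
  then obtain e2 where e2: "e2 \<in> {0,2}" "(a2 + e2*h) * (c0*c1*a3) \<le> u"
      "u \<le> (a2 + e2*h + h) * ((c0+h)*(c1+h)*(a3+3*h))" by blast
  define c2 where "c2 = a2 + e2*h"
  have e2': "c2 * (c0*c1*a3) \<le> u" "u \<le> (c2 + h) * ((c0+h)*(c1+h)*(a3+3*h))"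
    using e2 by (simp_all add: c2_def)
  have c2: "2/3 \<le> c2" "c2 + h \<le> 1" using e2(1) b2 h by (auto simp: c2_def)
  have s4: "(a3 + 2*h) * (c0*c1*c2) \<le> (a3 + h) * ((c0+h)*(c1+h)*(c2+h))"
    by (rule core) (use h c0 c1 c2 b3 in auto)
  have "\<exists>e\<in>{0,2::real}. (a3 + e*h) * (c0*c1*c2) \<le> u \<and> u \<le> (a3 + e*h + h) * ((c0+h)*(c1+h)*(c2+h))"
    by (rule split1[OF h _ _ s4]) (use e2' in \<open>simp_all add: mult_ac\<close>)
  then obtain e3 where e3: "e3 \<in> {0,2}" "(a3 + e3*h) * (c0*c1*c2) \<le> u"
      "u \<le> (a3 + e3*h + h) * ((c0+h)*(c1+h)*(c2+h))" by blast
  have f1: "c0*c1*c2*(a3+e3*h) \<le> u" using e3(2) by (simp add: mult_ac)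
  have f2: "u \<le> (c0+h)*(c1+h)*(c2+h)*(a3+e3*h+h)" using e3(3) by (simp add: mult_ac)
  show ?thesis
    using e0(1) e1(1) e2(1) e3(1) f1 f2 unfolding c0_def c1_def c2_def
    by blast
qed

definition dd :: "nat \<Rightarrow> real" where "dd n = 1 / 3 ^ Suc (Suc n)"

definition good :: "real \<Rightarrow> nat \<Rightarrow> (nat \<Rightarrow> real) \<Rightarrow> (nat \<Rightarrow> real) \<Rightarrow> bool" where
  "good u n a e \<longleftrightarrow> (\<forall>i. e i \<in> {0,2}) \<and>
     (a 0 + e 0 * dd n) * (a 1 + e 1 * dd n) * (a 2 + e 2 * dd n) * (a 3 + e 3 * dd n) \<le> u \<and>
     u \<le> (a 0 + e 0 * dd n + dd n) * (a 1 + e 1 * dd n + dd n) * (a 2 + e 2 * dd n + dd n) * (a 3 + e 3 * dd n + dd n)"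

definition ch :: "real \<Rightarrow> nat \<Rightarrow> (nat \<Rightarrow> real) \<Rightarrow> (nat \<Rightarrow> real)" where
  "ch u n a = (SOME e. good u n a e)"

primrec st :: "real \<Rightarrow> nat \<Rightarrow> nat \<Rightarrow> real" where
  "st u 0 = (\<lambda>i. 2/3)"
| "st u (Suc n) = (\<lambda>i. st u n i + ch u n (st u n) i * dd n)"

lemma dd_pos: "dd n > 0" by (simp add: dd_def)
lemma dd_Suc: "3 * dd (Suc n) = dd n" by (simp add: dd_def)
lemma dd_0: "dd 0 = 1/9" by (simp add: dd_def)

definition inv :: "real \<Rightarrow> nat \<Rightarrow> bool" where
  "inv u n \<longleftrightarrow> (\<forall>i. 2/3 \<le> st u n i \<and> st u n i + 3 * dd n \<le> 1) \<and>
     st u n 0 * st u n 1 * st u n 2 * st u n 3 \<le> u \<and>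
     u \<le> (st u n 0 + 3 * dd n) * (st u n 1 + 3 * dd n) * (st u n 2 + 3 * dd n) * (st u n 3 + 3 * dd n)"

lemma inv_good:
  assumes "inv u n"
  shows "good u n (st u n) (ch u n (st u n))"
proof -
  let ?a = "st u n"
  have "\<exists>e0\<in>{0,2}. \<exists>e1\<in>{0,2}. \<exists>e2\<in>{0,2}. \<exists>e3\<in>{0,2}.
     (?a 0+e0*dd n)*(?a 1+e1*dd n)*(?a 2+e2*dd n)*(?a 3+e3*dd n) \<le> u \<and>
     u \<le> (?a 0+e0*dd n+dd n)*(?a 1+e1*dd n+dd n)*(?a 2+e2*dd n+dd n)*(?a 3+e3*dd n+dd n)"
    by (rule four_split[OF dd_pos]) (use assms in \<open>auto simp: inv_def\<close>)
  then obtain e0 e1 e2 e3 where E: "e0 \<in> {0,2}" "e1 \<in> {0,2}" "e2 \<in> {0,2}" "e3 \<in> {0,2}"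
     "(?a 0+e0*dd n)*(?a 1+e1*dd n)*(?a 2+e2*dd n)*(?a 3+e3*dd n) \<le> u"
     "u \<le> (?a 0+e0*dd n+dd n)*(?a 1+e1*dd n+dd n)*(?a 2+e2*dd n+dd n)*(?a 3+e3*dd n+dd n)"
    by blast
  define e where "e = (\<lambda>i::nat. if i = 0 then e0 else if i = 1 then e1 else if i = 2 then e2 else if i = 3 then e3 else (0::real))"
  have "good u n ?a e" unfolding good_def e_def using E by auto
  then show ?thesis unfolding ch_def by (rule someI[where P = "good u n (st u n)"])
qed

lemma inv_all:
  assumes "16/81 \<le> u" "u \<le> 1"
  shows "inv u n"
proof (induction n)
  case 0
  show ?case using assms by (simp add: inv_def dd_0)
next
  case (Suc n)
  have g: "good u n (st u n) (ch u n (st u n))" by (rule inv_good[OF Suc])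
  let ?c = "ch u n (st u n)"
  have c: "?c i \<in> {0,2}" for i using g by (simp add: good_def)
  have b: "2/3 \<le> st u n i \<and> st u n i + 3 * dd n \<le> 1" for i using Suc by (simp add: inv_def)
  have "2/3 \<le> st u (Suc n) i \<and> st u (Suc n) i + 3 * dd (Suc n) \<le> 1" for i
    using b[of i] c[of i] dd_pos[of n] unfolding dd_Suc by auto
  then show ?case using g unfolding inv_def good_def dd_Suc by simp
qed

definition dig :: "real \<Rightarrow> nat \<Rightarrow> nat \<Rightarrow> real" where
  "dig u i k = (if k = 0 then 2 else ch u (k - 1) (st u (k - 1)) i)"

lemma st_sum: "st u n i = (\<Sum>k\<le>n. dig u i k / 3 ^ Suc k)"
proof (induction n)
  case 0
  then show ?case by (simp add: dig_def)
next
  case (Suc n)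
  then show ?case by (simp add: dig_def dd_def)
qed

lemma dig_01:
  assumes "16/81 \<le> u" "u \<le> 1"
  shows "dig u i k \<in> {0,2}"
proof (cases k)
  case 0 then show ?thesis by (simp add: dig_def)
next
  case (Suc m)
  have "good u m (st u m) (ch u m (st u m))" by (rule inv_good[OF inv_all[OF assms]])
  then show ?thesis using Suc by (simp add: dig_def good_def)
qed

lemma dd_lim: "dd \<longlonglongrightarrow> 0"
proof -
  have "dd = (\<lambda>n. (1/9) / 3^n)" by (auto simp: dd_def fun_eq_iff)
  then show ?thesis using LIMSEQ_divide_realpow_zero[of 3 "1/9"] by simp
qed

theorem theorem2:
  shows "{(8/9::real)^3 .. 8/9} \<subseteq>
           {a * b * c * d | a b c d. a \<in> cantor_set \<and> b \<in> cantor_set \<and> c \<in> cantor_set \<and> d \<in> cantor_set}"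
proof
  fix u :: real
  assume "u \<in> {(8/9::real)^3 .. 8/9}"
  then have u: "16/81 \<le> u" "u \<le> 1" by (auto simp: power3_eq_cube)
  define f where "f i k = dig u i k / 3 ^ Suc k" for i k
  have fnn: "0 \<le> f i k" for i k using dig_01[OF u, of i k] by (auto simp: f_def)
  have stf: "st u n i = sum (f i) {..n}" for n i by (simp add: st_sum f_def)
  have stb: "2/3 \<le> st u n i \<and> st u n i + 3 * dd n \<le> 1" for n i
    using inv_all[OF u, of n] by (simp add: inv_def)
  have summ: "summable (f i)" for i
  proof (rule summableI_nonneg_bounded[where x = 1])
    show "0 \<le> f i k" for k by (rule fnn)
    show "sum (f i) {..<n} \<le> 1" for n
    proof (cases n)
      case 0 then show ?thesis by simp
    next
      case (Suc m)
      then have "{..<n} = {..m}" by auto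
      then show ?thesis using stb[of m i] dd_pos[of m] stf[of m i] by simp
    qed
  qed
  define x where "x i = suminf (f i)" for i
  have xC: "x i \<in> cantor_set" for i
    unfolding cantor_set_def x_def f_def using dig_01[OF u, of i] by blast
  have lim: "(\<lambda>n. st u n i) \<longlonglongrightarrow> x i" for i
    unfolding stf x_def by (rule summable_LIMSEQ'[OF summ])
  have lim2: "(\<lambda>n. st u n i + 3 * dd n) \<longlonglongrightarrow> x i" for i
    using tendsto_add[OF lim[of i] tendsto_mult[OF tendsto_const[of 3] dd_lim]] by simp
  have L1: "(\<lambda>n. st u n 0 * st u n 1 * st u n 2 * st u n 3) \<longlonglongrightarrow> x 0 * x 1 * x 2 * x 3"
    by (intro tendsto_mult lim)
  have L2: "(\<lambda>n. (st u n 0 + 3 * dd n) * (st u n 1 + 3 * dd n) * (st u n 2 + 3 * dd n) * (st u n 3 + 3 * dd n))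
      \<longlonglongrightarrow> x 0 * x 1 * x 2 * x 3"
    by (intro tendsto_mult lim2)
  have "x 0 * x 1 * x 2 * x 3 \<le> u"
    by (rule LIMSEQ_le_const2[OF L1]) (use inv_all[OF u] in \<open>auto simp: inv_def\<close>)
  moreover have "u \<le> x 0 * x 1 * x 2 * x 3"
    by (rule LIMSEQ_le_const[OF L2]) (use inv_all[OF u] in \<open>auto simp: inv_def\<close>)
  ultimately have "u = x 0 * x 1 * x 2 * x 3" by simp
  then show "u \<in> {a * b * c * d | a b c d. a \<in> cantor_set \<and> b \<in> cantor_set \<and> c \<in> cantor_set \<and> d \<in> cantor_set}"
    using xC by blast
qed

end
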